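(* Under the setting below with the randomized sampling requirement, assume additionally that $G$ is convex and each $f_i$ is $\mu_{f_i}$-strongly convex ($\mu_{f_i}>0$). Let $\bm x^\star$ be the unique minimizer of $\Phi$, $\mu_F:=\frac1N\operatorname{blockdiag}(\mu_{f_1}I_{n_1},\dots,\mu_{f_N}I_{n_N})$, $\xi_i:=\frac{N-\gamma_iL_{f_i}}{N}$, and $c:=\min_{i\in[N]}\{\xi_ip_i/\gamma_i\}\,\big/\,\max_{i\in[N]}\{(N-\gamma_i\mu_{f_i})/(\gamma_i^2\mu_{f_i})\}$. Then for all $k$: $\mathbb E_k[\Phi^{\mathrm{FB}}_\Gamma(\bm x^{k+1})-\min\Phi]\le(1-c)(\Phi^{\mathrm{FB}}_\Gamma(\bm x^k)-\min\Phi)$, $\mathbb E[\Phi(\bm z^k)-\min\Phi]\le(\Phi(\bm x^0)-\min\Phi)(1-c)^k$, and $\frac12\mathbb E[\|\bm z^k-\bm x^\star\|^2_{\mu_F}]\le(\Phi(\bm x^0)-\min\Phi)(1-c)^k$. Moreover, assuming $\kappa_i:=L_{f_i}/\mu_{f_i}>1$ for all $i$, if the stepsizes and minimal sampling probabilities are chosen as $\gamma_i=\frac{N}{\mu_{f_i}}(1-\sqrt{1-1/\kappa_i})$ and $p_i=\frac{(\sqrt{\kappa_i}+\sqrt{\kappa_i-1})^2}{\sum_{j=1}^N(\sqrt{\kappa_j}+\sqrt{\kappa_j-1})^2}$, then the three inequalities hold with $c=1\big/\sum_{i=1}^N(\sqrt{\kappa_i}+\sqrt{\kappa_i-1})^2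$.
   Context: Setting: $N\ge1$, $n=\sum_{i=1}^N n_i$, $\bm x=(x_1,\dots,x_N)$ with $x_i\in\mathbb R^{n_i}$; $\Phi=F+G$ with $F(\bm x)=\frac1N\sum_i f_i(x_i)$, each $f_i:\mathbb R^{n_i}\to\mathbb R$ differentiable with $L_{f_i}$-Lipschitz gradient, $G:\mathbb R^n\to\mathbb R\cup\{+\infty\}$ proper lsc, $\arg\min\Phi\ne\emptyset$. $\gamma_i\in(0,N/L_{f_i})$, $\Gamma=\operatorname{blockdiag}(\gamma_1I_{n_1},\dots,\gamma_NI_{n_N})$, $\|x\|_V^2=\langle x,Vx\rangle$, $\operatorname{prox}_G^{V}(u)=\arg\min_w\{G(w)+\frac12\|w-u\|_V^2\}$, $\mathbf T(\bm x)=\operatorname{prox}_G^{\Gamma^{-1}}(\bm x-\Gamma\nabla F(\bm x))$. Forward-backward envelope: $\Phi^{\mathrm{FB}}_\Gamma(\bm x):=\inf_{\bm w}\{F(\bm x)+\langle\nabla F(\bm x),\bm w-\bm x\rangle+G(\bm w)+\frac12\|\bm w-\bm x\|^2_{\Gamma^{-1}}\}$. Algorithm BC: given $\bm x^0\in\mathbb R^n$, for $k=0,1,\dots$: pick $\bm z^k\in\mathbf T(\bm x^k)$; select $I^{k+1}\subseteq[N]$; set $x_i^{k+1}=z_i^k$ for $i\in I^{k+1}$ and $x_i^{k+1}=x_i^k$ otherwise. Randomized sampling requirement: there exist $p_1,\dots,p_N>0$ such that at every iteration, conditionally on the past, $\mathbb P(i\in I^{k+1})\ge p_i$ for every $i$.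 $\mathbb E_k$ denotes expectation conditional on the history up to iteration $k$; $\mathbb E$ is unconditional expectation. *)

theory Defs
  imports "HOL-Analysis.Analysis" "HOL-Probability.Probability"
begin

text \<open>The whole space R^n is real^'c (coordinates 'c, n = CARD('c));
  the blocks are indexed by the finite type 'n (N = CARD('n)); coordinate j belongs to
  block blk j.  Block i (i.e. R^(n_i)) is the subspace of vectors supported on
  {j. blk j = i}.\<close>

definition blockproj :: "('c::finite \<Rightarrow> 'n) \<Rightarrow> 'n \<Rightarrow> real^'c \<Rightarrow> real^'c" where
  "blockproj blk i x = (\<chi> j. if blk j = i then x $ j else 0)"

text \<open>Weighted squared norm  ||v||_V^2 = <v, V v>  for a diagonal V = diag(w).\<close>
definition wnormsq :: "('c::finite \<Rightarrow> real) \<Rightarrow> real^'c \<Rightarrow> real" where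
  "wnormsq w v = (\<Sum>j\<in>UNIV. w j * (v $ j)^2)"

definition Gamma_mult :: "('c::finite \<Rightarrow> 'n) \<Rightarrow> ('n \<Rightarrow> real) \<Rightarrow> real^'c \<Rightarrow> real^'c" where
  "Gamma_mult blk \<gamma> v = (\<chi> j. \<gamma> (blk j) * v $ j)"

definition Ginv_normsq :: "('c::finite \<Rightarrow> 'n) \<Rightarrow> ('n \<Rightarrow> real) \<Rightarrow> real^'c \<Rightarrow> real" where
  "Ginv_normsq blk \<gamma> v = wnormsq (\<lambda>j. 1 / \<gamma> (blk j)) v"

text \<open>F(x) = (1/N) sum_i f_i(x_i) and its gradient (each f i is a function of block i only).\<close>
definition Fsum :: "('n::finite \<Rightarrow> real^'c::finite \<Rightarrow> real) \<Rightarrow> real^'c \<Rightarrow> real" where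
  "Fsum f x = (1 / real CARD('n)) * (\<Sum>i\<in>UNIV. f i x)"

definition gradF :: "('n::finite \<Rightarrow> real^'c::finite \<Rightarrow> real^'c) \<Rightarrow> real^'c \<Rightarrow> real^'c" where
  "gradF df x = (1 / real CARD('n)) *\<^sub>R (\<Sum>i\<in>UNIV. df i x)"

definition Phi :: "('n::finite \<Rightarrow> real^'c::finite \<Rightarrow> real) \<Rightarrow> (real^'c \<Rightarrow> ereal) \<Rightarrow> real^'c \<Rightarrow> ereal" where
  "Phi f G x = ereal (Fsum f x) + G x"

definition proper_fun :: "('a \<Rightarrow> ereal) \<Rightarrow> bool" where
  "proper_fun G \<longleftrightarrow> (\<forall>x. G x \<noteq> -\<infinity>) \<and> (\<exists>x. G x \<noteq> \<infinity>)"

definition lsc_fun :: "('a::topological_space \<Rightarrow> ereal) \<Rightarrow> bool" where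
  "lsc_fun G \<longleftrightarrow> (\<forall>a. closed {x. G x \<le> a})"

definition convex_ext :: "('a::real_vector \<Rightarrow> ereal) \<Rightarrow> bool" where
  "convex_ext G \<longleftrightarrow> convex {(x, t::real). G x \<le> ereal t}"

definition prox_Ginv :: "('c::finite \<Rightarrow> 'n) \<Rightarrow> ('n \<Rightarrow> real) \<Rightarrow> (real^'c \<Rightarrow> ereal) \<Rightarrow> real^'c \<Rightarrow> (real^'c) set" where
  "prox_Ginv blk \<gamma> G u =
     {w. \<forall>v. G w + ereal (Ginv_normsq blk \<gamma> (w - u) / 2) \<le> G v + ereal (Ginv_normsq blk \<gamma> (v - u) / 2)}"

definition Tmap :: "('c::finite \<Rightarrow> 'n::finite) \<Rightarrow> ('n \<Rightarrow> real) \<Rightarrow> ('n \<Rightarrow> real^'c \<Rightarrow> real^'c)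
     \<Rightarrow> (real^'c \<Rightarrow> ereal) \<Rightarrow> real^'c \<Rightarrow> (real^'c) set" where
  "Tmap blk \<gamma> df G x = prox_Ginv blk \<gamma> G (x - Gamma_mult blk \<gamma> (gradF df x))"

definition FBE :: "('c::finite \<Rightarrow> 'n::finite) \<Rightarrow> ('n \<Rightarrow> real) \<Rightarrow> ('n \<Rightarrow> real^'c \<Rightarrow> real)
     \<Rightarrow> ('n \<Rightarrow> real^'c \<Rightarrow> real^'c) \<Rightarrow> (real^'c \<Rightarrow> ereal) \<Rightarrow> real^'c \<Rightarrow> ereal" where
  "FBE blk \<gamma> f df G x =
     (INF w. ereal (Fsum f x + gradF df x \<bullet> (w - x) + Ginv_normsq blk \<gamma> (w - x) / 2) + G w)"

definition bc_update :: "('c::finite \<Rightarrow> 'n) \<Rightarrow> real^'c \<Rightarrow> real^'c \<Rightarrow> 'n set \<Rightarrow> real^'c" where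
  "bc_update blk x z I = (\<chi> j. if blk j \<in> I then z $ j else x $ j)"

text \<open>A history of length k is the list [I^k, ..., I^1] of the sampled
  index sets (most recent first).  sel h is the point z^k \<in> T(x^k) picked after history h;
  Q h is the (conditional) distribution of I^{k+1} given the history h.\<close>
primrec bc_iter :: "('c::finite \<Rightarrow> 'n) \<Rightarrow> real^'c \<Rightarrow> ('n set list \<Rightarrow> real^'c) \<Rightarrow> 'n set list \<Rightarrow> real^'c" where
  "bc_iter blk x0 sel [] = x0"
| "bc_iter blk x0 sel (I # h) = bc_update blk (bc_iter blk x0 sel h) (sel h) I"

primrec bc_hist :: "('n set list \<Rightarrow> 'n set pmf) \<Rightarrow> nat \<Rightarrow> 'n set list pmf" where
  "bc_hist Q 0 = return_pmf []"
| "bc_hist Q (Suc k) = bind_pmf (bc_hist Q k) (\<lambda>h. map_pmf (\<lambda>I. I # h) (Q h))"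

text \<open>The three conclusions of the theorem for a given rate c.  E_k is expectation over
  I^{k+1} ~ Q h for the given history h; E is expectation over the law of the history.\<close>
definition bc_rates :: "('c::finite \<Rightarrow> 'n::finite) \<Rightarrow> ('n \<Rightarrow> real) \<Rightarrow> ('n \<Rightarrow> real^'c \<Rightarrow> real)
     \<Rightarrow> ('n \<Rightarrow> real^'c \<Rightarrow> real^'c) \<Rightarrow> (real^'c \<Rightarrow> ereal) \<Rightarrow> ('n set list \<Rightarrow> 'n set pmf)
     \<Rightarrow> ('n set list \<Rightarrow> real^'c) \<Rightarrow> real^'c \<Rightarrow> real^'c \<Rightarrow> ('n \<Rightarrow> real) \<Rightarrow> real \<Rightarrow> bool" where
  "bc_rates blk \<gamma> f df G Q sel x0 xstar \<mu> c \<longleftrightarrow>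
     (\<forall>h. ereal (measure_pmf.expectation (Q h)
              (\<lambda>I. real_of_ereal (FBE blk \<gamma> f df G (bc_iter blk x0 sel (I # h)) - Phi f G xstar)))
          \<le> ereal (1 - c) * (FBE blk \<gamma> f df G (bc_iter blk x0 sel h) - Phi f G xstar))
   \<and> (\<forall>k. ereal (measure_pmf.expectation (bc_hist Q k)
              (\<lambda>h. real_of_ereal (Phi f G (sel h) - Phi f G xstar)))
          \<le> (Phi f G x0 - Phi f G xstar) * ereal ((1 - c) ^ k))
   \<and> (\<forall>k. ereal (measure_pmf.expectation (bc_hist Q k)
              (\<lambda>h. wnormsq (\<lambda>j. \<mu> (blk j) / real CARD('n)) (sel h - xstar) / 2))
          \<le> (Phi f G x0 - Phi f G xstar) * ereal ((1 - c) ^ k))"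

end

theory Submission
  imports Defs
begin

lemma blockproj_nth[simp]: "blockproj blk i x $ j = (if blk j = i then x $ j else 0)"
  by (simp add: blockproj_def)

lemma blockproj_diff: "blockproj blk i (x - y) = blockproj blk i x - blockproj blk i y"
  by (simp add: vec_eq_iff)

lemma blockproj_add: "blockproj blk i (x + y) = blockproj blk i x + blockproj blk i y"
  by (simp add: vec_eq_iff)

lemma blockproj_scale: "blockproj blk i (t *\<^sub>R x) = t *\<^sub>R blockproj blk i x"
  by (simp add: vec_eq_iff)

lemma norm_blockproj_sq: "(norm (blockproj blk i x))\<^sup>2 = (\<Sum>j\<in>UNIV. if blk j = i then (x $ j)\<^sup>2 else 0)"
proof -
  have "(norm (blockproj blk i x))\<^sup>2 = (\<Sum>j\<in>UNIV. (blockproj blk i x $ j)\<^sup>2)"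
    unfolding norm_vec_def L2_set_def by (simp add: sum_nonneg)
  also have "\<dots> = (\<Sum>j\<in>UNIV. if blk j = i then (x $ j)\<^sup>2 else 0)"
    by (rule sum.cong) auto
  finally show ?thesis .
qed

lemma inner_vec_sum: "(a::real^'c::finite) \<bullet> b = (\<Sum>j\<in>UNIV. a $ j * b $ j)"
  by (simp add: inner_vec_def)

lemma inner_supp:
  assumes "\<And>j. blk j \<noteq> i \<Longrightarrow> a $ j = 0"
  shows "(a::real^'c::finite) \<bullet> d = a \<bullet> blockproj blk i d"
  unfolding inner_vec_sum by (rule sum.cong) (auto simp: assms)

lemma line_deriv:
  fixes F :: "real^'c::finite \<Rightarrow> real"
  assumes "GDERIV F (x + t *\<^sub>R d) :> D"
  shows "((\<lambda>s. F (x + s *\<^sub>R d)) has_real_derivative (D \<bullet> d)) (at t)"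
proof -
  have l: "((\<lambda>s. x + s *\<^sub>R d) has_derivative (\<lambda>s. s *\<^sub>R d)) (at t)"
    by (auto intro!: derivative_eq_intros)
  have "((\<lambda>s. F (x + s *\<^sub>R d)) has_derivative (\<lambda>s. (s *\<^sub>R d) \<bullet> D)) (at t)"
    using has_derivative_compose[OF l] assms unfolding gderiv_def by blast
  moreover have "(\<lambda>s. (s *\<^sub>R d) \<bullet> D) = (\<lambda>s. s * (D \<bullet> d))"
    by (auto simp: inner_commute)
  ultimately show ?thesis unfolding has_field_derivative_def
    by (simp add: mult.commute[of _ "D \<bullet> d"])
qed

locale bcs =
  fixes blk :: "'c::finite \<Rightarrow> 'n::finite"
    and f :: "'n \<Rightarrow> real^'c \<Rightarrow> real"
    and df :: "'n \<Rightarrow> real^'c \<Rightarrow> real^'c"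
    and L \<mu> \<gamma> :: "'n \<Rightarrow> real"
    and G :: "real^'c \<Rightarrow> ereal"
  assumes blocks_nonempty: "surj blk"
    and f_block: "\<And>i x. f i x = f i (blockproj blk i x)"
    and f_grad: "\<And>i x. GDERIV (f i) x :> df i x"
    and L_pos: "\<And>i. L i > 0"
    and f_lipschitz: "\<And>i x y. norm (df i x - df i y) \<le> L i * norm (blockproj blk i x - blockproj blk i y)"
    and \<mu>_pos: "\<And>i. \<mu> i > 0"
    and f_strongly_convex: "\<And>i. convex_on UNIV (\<lambda>x. f i x - \<mu> i / 2 * (norm (blockproj blk i x))\<^sup>2)"
    and G_proper: "proper_fun G" and G_convex: "convex_ext G"
    and \<gamma>_pos: "\<And>i. \<gamma> i > 0"
    and \<gamma>_bound: "\<And>i. \<gamma> i * L i < real CARD('n)"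
begin

lemma df_supp:
  assumes "blk j \<noteq> i"
  shows "df i x $ j = 0"
proof -
  let ?e = "axis j (1::real) :: real^'c"
  have c: "f i (x + s *\<^sub>R ?e) = f i x" for s
  proof -
    have "blockproj blk i (x + s *\<^sub>R ?e) = blockproj blk i x"
      using assms by (auto simp: vec_eq_iff axis_def)
    then show ?thesis using f_block by metis
  qed
  have "((\<lambda>s. f i (x + s *\<^sub>R ?e)) has_real_derivative (df i x \<bullet> ?e)) (at 0)"
    using line_deriv[of "f i" x 0 ?e "df i x"] f_grad by simp
  then have "((\<lambda>s. f i x) has_real_derivative (df i x \<bullet> ?e)) (at 0)"
    using c by simp
  then have "df i x \<bullet> ?e = 0"
    using DERIV_unique DERIV_const by blast
  then show ?thesis by (simp add: inner_axis)
qed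

lemma df_eq:
  assumes "blockproj blk i x = blockproj blk i y"
  shows "df i x = df i y"
  using f_lipschitz[of i x y] assms by simp

lemma descent:
  "f i y \<le> f i x + df i x \<bullet> (y - x) + L i / 2 * (norm (blockproj blk i (y - x)))\<^sup>2"
proof -
  define d where "d = y - x"
  define q where "q = (norm (blockproj blk i d))\<^sup>2"
  define \<phi> where "\<phi> t = f i (x + t *\<^sub>R d) - t * (df i x \<bullet> d) - L i / 2 * t\<^sup>2 * q" for t
  have "\<phi> 1 \<le> \<phi> 0"
  proof (rule DERIV_nonpos_imp_nonincreasing[of 0 1 \<phi>])
    fix t :: real assume t: "0 \<le> t" "t \<le> 1"
    have d1: "((\<lambda>s. f i (x + s *\<^sub>R d)) has_real_derivative (df i (x + t *\<^sub>R d) \<bullet> d)) (at t)"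
      by (rule line_deriv) (rule f_grad)
    have "(\<phi> has_real_derivative (df i (x + t *\<^sub>R d) \<bullet> d - df i x \<bullet> d - L i / 2 * (2 * t) * q)) (at t)"
      unfolding \<phi>_def
      by (rule derivative_eq_intros d1 | simp)+
    moreover have "df i (x + t *\<^sub>R d) \<bullet> d - df i x \<bullet> d - L i / 2 * (2 * t) * q \<le> 0"
    proof -
      let ?a = "df i (x + t *\<^sub>R d) - df i x"
      have "?a \<bullet> d = ?a \<bullet> blockproj blk i d"
        by (rule inner_supp) (simp add: df_supp)
      also have "\<dots> \<le> norm ?a * norm (blockproj blk i d)"
        by (rule norm_cauchy_schwarz)
      also have "\<dots> \<le> (L i * norm (blockproj blk i (x + t *\<^sub>R d) - blockproj blk i x)) * norm (blockproj blk i d)"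
        by (rule mult_right_mono[OF f_lipschitz]) simp
      also have "blockproj blk i (x + t *\<^sub>R d) - blockproj blk i x = t *\<^sub>R blockproj blk i d"
        by (simp add: blockproj_add blockproj_scale)
      also have "(L i * norm (t *\<^sub>R blockproj blk i d)) * norm (blockproj blk i d) = L i * t * q"
        using t by (simp add: q_def power2_eq_square)
      finally have "?a \<bullet> d \<le> L i * t * q" .
      then show ?thesis by (simp add: inner_diff_left)
    qed
    ultimately show "\<exists>y. (\<phi> has_real_derivative y) (at t) \<and> y \<le> 0" by blast
  qed simp
  then show ?thesis unfolding \<phi>_def q_def d_def by simp
qed

lemma strong_conv:
  "f i y \<ge> f i x + df i x \<bullet> (y - x) + \<mu> i / 2 * (norm (blockproj blk i (y - x)))\<^sup>2"
proof -
  define d where "d = y - x"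
  let ?P = "blockproj blk i"
  define \<psi> where "\<psi> s = f i (x + s *\<^sub>R d) - \<mu> i / 2 * (norm (?P (x + s *\<^sub>R d)))\<^sup>2" for s
  have cv: "convex_on UNIV \<psi>"
  proof (rule convex_onI)
    fix t s1 s2 :: real assume t: "0 < t" "t < 1"
    have e: "x + ((1 - t) *\<^sub>R s1 + t *\<^sub>R s2) *\<^sub>R d = (1 - t) *\<^sub>R (x + s1 *\<^sub>R d) + t *\<^sub>R (x + s2 *\<^sub>R d)"
      by (simp add: algebra_simps)
    show "\<psi> ((1 - t) *\<^sub>R s1 + t *\<^sub>R s2) \<le> (1 - t) * \<psi> s1 + t * \<psi> s2"
      unfolding \<psi>_def e
      using convex_onD[OF f_strongly_convex[of i], of t "x + s1 *\<^sub>R d" "x + s2 *\<^sub>R d"] t by simp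
  qed simp
  have nq: "(norm (?P (x + s *\<^sub>R d)))\<^sup>2 = (norm (?P x))\<^sup>2 + 2 * s * (?P x \<bullet> ?P d) + s\<^sup>2 * (norm (?P d))\<^sup>2" for s
    unfolding power2_norm_eq_inner blockproj_add blockproj_scale
    by (simp add: inner_add_left inner_add_right algebra_simps power2_eq_square inner_commute)
  have "(\<psi> has_real_derivative (df i x \<bullet> d - \<mu> i / 2 * (2 * (?P x \<bullet> ?P d)))) (at 0)"
  proof -
    have d1: "((\<lambda>s. f i (x + s *\<^sub>R d)) has_real_derivative (df i (x + 0 *\<^sub>R d) \<bullet> d)) (at 0)"
      by (rule line_deriv) (rule f_grad)
    have "((\<lambda>s. f i (x + s *\<^sub>R d) - \<mu> i / 2 * ((norm (?P x))\<^sup>2 + 2 * s * (?P x \<bullet> ?P d) + s\<^sup>2 * (norm (?P d))\<^sup>2))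
       has_real_derivative (df i x \<bullet> d - \<mu> i / 2 * (0 + 2 * 1 * (?P x \<bullet> ?P d) + 2 * 0 * (norm (?P d))\<^sup>2))) (at 0)"
      using d1 by (auto intro!: derivative_eq_intros)
    then show ?thesis unfolding \<psi>_def nq by simp
  qed
  then have "\<psi> 1 - \<psi> 0 \<ge> (df i x \<bullet> d - \<mu> i / 2 * (2 * (?P x \<bullet> ?P d))) * (1 - 0)"
    by (intro convex_on_imp_above_tangent[OF cv]) auto
  moreover have "\<psi> 1 = f i y - \<mu> i / 2 * ((norm (?P x))\<^sup>2 + 2 * (?P x \<bullet> ?P d) + (norm (?P d))\<^sup>2)"
    unfolding \<psi>_def using nq[of 1] by (simp add: d_def)
  moreover have "\<psi> 0 = f i x - \<mu> i / 2 * (norm (?P x))\<^sup>2" unfolding \<psi>_def by simp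
  ultimately show ?thesis unfolding d_def by (simp add: algebra_simps)
qed

end



lemma sum_blocks:
  fixes blk :: "'c::finite \<Rightarrow> 'n::finite" and h :: "'n \<Rightarrow> 'c \<Rightarrow> real"
  shows "(\<Sum>i\<in>UNIV. \<Sum>j\<in>UNIV. if blk j = i then h i j else 0) = (\<Sum>j\<in>UNIV. h (blk j) j)"
  apply (subst sum.swap)
  apply (rule sum.cong, simp)
  apply (simp add: if_distrib eq_commute[of "blk _"] cong: if_cong)
  done

lemma limit_arg:
  fixes a c :: real
  assumes "c \<ge> 0" and "\<And>t. 0 < t \<Longrightarrow> t \<le> 1 \<Longrightarrow> 0 \<le> t * a + t\<^sup>2 * c"
  shows "0 \<le> a"
proof (rule ccontr)
  assume "\<not> 0 \<le> a"
  define t where "t = min 1 ((- a) / (2 * (c + 1)))"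
  have "(- a) / (2 * (c + 1)) > 0" using \<open>\<not> 0 \<le> a\<close> assms(1) by (intro divide_pos_pos) auto
  then have t: "0 < t" "t \<le> 1" by (auto simp: t_def)
  have "0 \<le> t * (a + t * c)" using assms(2)[OF t] by (simp add: power2_eq_square algebra_simps)
  then have "0 \<le> a + t * c" using t(1) by (simp add: zero_le_mult_iff)
  moreover have "t * c \<le> (- a) / 2"
  proof -
    have "t * c \<le> ((- a) / (2 * (c + 1))) * c" using t assms(1) by (intro mult_right_mono) (auto simp: t_def)
    also have "\<dots> \<le> (- a) / 2" using \<open>\<not> 0 \<le> a\<close> assms(1) by (simp add: field_simps)
    finally show ?thesis .
  qed
  ultimately show False using \<open>\<not> 0 \<le> a\<close> by linarith
qed

lemma sq_exp: "((z - u::real) + t*B)^2/g = (z - u)^2/g - 2*t*((u - z)*B/g) + t^2*(B^2/g)"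
  by (simp add: power2_eq_square add_divide_distrib diff_divide_distrib algebra_simps)

lemma Ginv_sum: "Ginv_normsq blk \<gamma> v = (\<Sum>j\<in>UNIV. (v $ j)\<^sup>2 / \<gamma> (blk j))"
  by (simp add: Ginv_normsq_def wnormsq_def)

context bcs
begin

lemma Gz_finite:
  assumes "z \<in> prox_Ginv blk \<gamma> G u"
  shows "\<bar>G z\<bar> \<noteq> \<infinity>"
proof -
  obtain w0 where w0: "G w0 \<noteq> \<infinity>" using G_proper unfolding proper_fun_def by blast
  have "G z + ereal (Ginv_normsq blk \<gamma> (z - u) / 2) \<le> G w0 + ereal (Ginv_normsq blk \<gamma> (w0 - u) / 2)"
    using assms unfolding prox_Ginv_def by blast
  then have "G z \<noteq> \<infinity>" using w0 by auto
  moreover have "G z \<noteq> -\<infinity>" using G_proper unfolding proper_fun_def by blast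
  ultimately show ?thesis by auto
qed

lemma G_conv_comb:
  assumes "\<bar>G a\<bar> \<noteq> \<infinity>" "\<bar>G b\<bar> \<noteq> \<infinity>" "0 \<le> t" "t \<le> 1"
  shows "G ((1 - t) *\<^sub>R a + t *\<^sub>R b) \<le> ereal ((1 - t) * real_of_ereal (G a) + t * real_of_ereal (G b))"
proof -
  let ?S = "{(x, s::real). G x \<le> ereal s}"
  have c: "convex ?S" using G_convex unfolding convex_ext_def .
  have "(a, real_of_ereal (G a)) \<in> ?S" "(b, real_of_ereal (G b)) \<in> ?S"
    using assms by (auto simp: ereal_real)
  from convexD[OF c this, of "1 - t" t] assms
  have "((1 - t) *\<^sub>R a + t *\<^sub>R b, (1 - t) * real_of_ereal (G a) + t * real_of_ereal (G b)) \<in> ?S"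
    by (simp add: scaleR_prod_def)
  then show ?thesis by simp
qed

lemma prox_vi:
  assumes "z \<in> prox_Ginv blk \<gamma> G u"
  shows "G v \<ge> G z + ereal (\<Sum>j\<in>UNIV. (u $ j - z $ j) * (v $ j - z $ j) / \<gamma> (blk j))"
proof (cases "G v = \<infinity>")
  case True
  have "G z \<noteq> -\<infinity>" using G_proper unfolding proper_fun_def by blast
  then show ?thesis using True by simp
next
  case False
  have gz: "\<bar>G z\<bar> \<noteq> \<infinity>" by (rule Gz_finite[OF assms])
  have gv: "\<bar>G v\<bar> \<noteq> \<infinity>" using False G_proper unfolding proper_fun_def by auto
  define a where "a = real_of_ereal (G z)"
  define b where "b = real_of_ereal (G v)"
  define S where "S = (\<Sum>j\<in>UNIV. (u $ j - z $ j) * (v $ j - z $ j) / \<gamma> (blk j))"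
  have Gza: "G z = ereal a" using gz unfolding a_def by (simp add: ereal_real)
  define C where "C = (\<Sum>j\<in>UNIV. (v $ j - z $ j)\<^sup>2 / \<gamma> (blk j))"
  have Cnn: "C / 2 \<ge> 0" unfolding C_def using \<gamma>_pos by (intro divide_nonneg_pos sum_nonneg) auto
  have key: "0 \<le> t * (b - a - S) + t\<^sup>2 * (C / 2)" if t: "0 < t" "t \<le> 1" for t
  proof -
    let ?w = "(1 - t) *\<^sub>R z + t *\<^sub>R v"
    have "G z + ereal (Ginv_normsq blk \<gamma> (z - u) / 2) \<le> G ?w + ereal (Ginv_normsq blk \<gamma> (?w - u) / 2)"
      using assms unfolding prox_Ginv_def by blast
    also have "\<dots> \<le> ereal ((1 - t) * a + t * b) + ereal (Ginv_normsq blk \<gamma> (?w - u) / 2)"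
    proof (rule add_right_mono)
      show "G ?w \<le> ereal ((1 - t) * a + t * b)"
        using G_conv_comb[OF gz gv, of t] t unfolding a_def b_def by simp
    qed
    finally have "a + Ginv_normsq blk \<gamma> (z - u) / 2 \<le> (1 - t) * a + t * b + Ginv_normsq blk \<gamma> (?w - u) / 2"
      unfolding Gza plus_ereal.simps ereal_less_eq .
    moreover have "Ginv_normsq blk \<gamma> (?w - u) = Ginv_normsq blk \<gamma> (z - u) - 2 * t * S + t\<^sup>2 * C"
    proof -
      have "Ginv_normsq blk \<gamma> (?w - u) = (\<Sum>j\<in>UNIV. (z $ j - u $ j)\<^sup>2 / \<gamma> (blk j) - 2 * t * ((u $ j - z $ j) * (v $ j - z $ j) / \<gamma> (blk j)) + t\<^sup>2 * ((v $ j - z $ j)\<^sup>2 / \<gamma> (blk j)))"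
        unfolding Ginv_sum
      proof (rule sum.cong[OF refl])
        fix j
        have e: "(?w - u) $ j = (z $ j - u $ j) + t * (v $ j - z $ j)" by (simp add: algebra_simps)
        show "((?w - u) $ j)\<^sup>2 / \<gamma> (blk j) = (z $ j - u $ j)\<^sup>2 / \<gamma> (blk j) - 2 * t * ((u $ j - z $ j) * (v $ j - z $ j) / \<gamma> (blk j)) + t\<^sup>2 * ((v $ j - z $ j)\<^sup>2 / \<gamma> (blk j))"
          unfolding e by (rule sq_exp)
      qed
      also have "\<dots> = Ginv_normsq blk \<gamma> (z - u) - 2 * t * S + t\<^sup>2 * C"
        unfolding Ginv_sum S_def C_def
        by (simp add: sum.distrib sum_subtractf sum_distrib_left)
      finally show ?thesis .
    qed
    ultimately show ?thesis by (simp add: algebra_simps)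
  qed
  have "0 \<le> b - a - S" by (rule limit_arg[OF Cnn key])
  moreover have Gvb: "G v = ereal b" using gv unfolding b_def by (simp add: ereal_real)
  ultimately show ?thesis unfolding S_def[symmetric] Gza Gvb plus_ereal.simps ereal_less_eq by simp
qed

end


lemma blocksum_norm:
  fixes blk :: "'c::finite \<Rightarrow> 'n::finite"
  shows "(\<Sum>i\<in>UNIV. c i * (norm (blockproj blk i d))\<^sup>2) = (\<Sum>j\<in>UNIV. c (blk j) * (d $ j)\<^sup>2)"
proof -
  have "(\<Sum>i\<in>UNIV. c i * (norm (blockproj blk i d))\<^sup>2)
      = (\<Sum>i\<in>UNIV. \<Sum>j\<in>UNIV. if blk j = i then c i * (d $ j)\<^sup>2 else 0)"
    unfolding norm_blockproj_sq sum_distrib_left by (intro sum.cong refl) auto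
  also have "\<dots> = (\<Sum>j\<in>UNIV. c (blk j) * (d $ j)\<^sup>2)" by (rule sum_blocks)
  finally show ?thesis .
qed

lemma gradF_inner: "gradF df x \<bullet> v = (1 / real CARD('n)) * (\<Sum>i\<in>UNIV. df i x \<bullet> v)"
  for df :: "'n::finite \<Rightarrow> real^'c::finite \<Rightarrow> real^'c"
  by (simp add: gradF_def inner_sum_left)

lemma Fsum_sum: "Fsum f x = (1 / real CARD('n)) * (\<Sum>i\<in>UNIV. f i x)"
  for f :: "'n::finite \<Rightarrow> real^'c::finite \<Rightarrow> real"
  by (simp add: Fsum_def)

context bcs
begin

lemma Fsum_descent:
  "Fsum f y \<le> Fsum f x + gradF df x \<bullet> (y - x) + (1 / real CARD('n)) * (\<Sum>j\<in>UNIV. L (blk j) / 2 * ((y - x) $ j)\<^sup>2)"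
proof -
  have "(\<Sum>i\<in>UNIV. f i y) \<le> (\<Sum>i\<in>UNIV. f i x + df i x \<bullet> (y - x) + L i / 2 * (norm (blockproj blk i (y - x)))\<^sup>2)"
    by (intro sum_mono descent)
  also have "\<dots> = (\<Sum>i\<in>UNIV. f i x) + (\<Sum>i\<in>UNIV. df i x \<bullet> (y - x)) + (\<Sum>j\<in>UNIV. L (blk j) / 2 * ((y - x) $ j)\<^sup>2)"
  proof -
    have "(\<Sum>i\<in>UNIV. L i / 2 * (norm (blockproj blk i (y - x)))\<^sup>2) = (\<Sum>j\<in>UNIV. L (blk j) / 2 * ((y - x) $ j)\<^sup>2)"
      by (rule blocksum_norm)
    then show ?thesis by (simp only: sum.distrib)
  qed
  finally have "(1 / real CARD('n)) * (\<Sum>i\<in>UNIV. f i y) \<le> (1 / real CARD('n)) * ((\<Sum>i\<in>UNIV. f i x) + (\<Sum>i\<in>UNIV. df i x \<bullet> (y - x)) + (\<Sum>j\<in>UNIV. L (blk j) / 2 * ((y - x) $ j)\<^sup>2))"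
    by (rule mult_left_mono) simp
  then show ?thesis unfolding Fsum_sum gradF_inner distrib_left .
qed

lemma Fsum_sc:
  "Fsum f y \<ge> Fsum f x + gradF df x \<bullet> (y - x) + (1 / real CARD('n)) * (\<Sum>j\<in>UNIV. \<mu> (blk j) / 2 * ((y - x) $ j)\<^sup>2)"
proof -
  have "(\<Sum>i\<in>UNIV. f i y) \<ge> (\<Sum>i\<in>UNIV. f i x + df i x \<bullet> (y - x) + \<mu> i / 2 * (norm (blockproj blk i (y - x)))\<^sup>2)"
    by (intro sum_mono strong_conv)
  moreover have "(\<Sum>i\<in>UNIV. f i x + df i x \<bullet> (y - x) + \<mu> i / 2 * (norm (blockproj blk i (y - x)))\<^sup>2) = (\<Sum>i\<in>UNIV. f i x) + (\<Sum>i\<in>UNIV. df i x \<bullet> (y - x)) + (\<Sum>j\<in>UNIV. \<mu> (blk j) / 2 * ((y - x) $ j)\<^sup>2)"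
  proof -
    have "(\<Sum>i\<in>UNIV. \<mu> i / 2 * (norm (blockproj blk i (y - x)))\<^sup>2) = (\<Sum>j\<in>UNIV. \<mu> (blk j) / 2 * ((y - x) $ j)\<^sup>2)"
      by (rule blocksum_norm)
    then show ?thesis by (simp only: sum.distrib)
  qed
  ultimately have "(1 / real CARD('n)) * (\<Sum>i\<in>UNIV. f i y) \<ge> (1 / real CARD('n)) * ((\<Sum>i\<in>UNIV. f i x) + (\<Sum>i\<in>UNIV. df i x \<bullet> (y - x)) + (\<Sum>j\<in>UNIV. \<mu> (blk j) / 2 * ((y - x) $ j)\<^sup>2))"
    by (intro mult_left_mono) simp_all
  then show ?thesis unfolding Fsum_sum gradF_inner distrib_left .
qed

lemma FBE_le:
  "FBE blk \<gamma> f df G x \<le> ereal (Fsum f x + gradF df x \<bullet> (w - x) + Ginv_normsq blk \<gamma> (w - x) / 2) + G w"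
  unfolding FBE_def by (rule INF_lower) simp

lemma shift_id:
  "gradF df x \<bullet> (w - x) + Ginv_normsq blk \<gamma> (w - x) / 2
   = Ginv_normsq blk \<gamma> (w - (x - Gamma_mult blk \<gamma> (gradF df x))) / 2
     - (\<Sum>j\<in>UNIV. \<gamma> (blk j) * (gradF df x $ j)\<^sup>2 / 2)"
proof -
  have "(\<Sum>j\<in>UNIV. gradF df x $ j * (w - x) $ j + ((w - x) $ j)\<^sup>2 / \<gamma> (blk j) / 2)
      = (\<Sum>j\<in>UNIV. ((w - (x - Gamma_mult blk \<gamma> (gradF df x))) $ j)\<^sup>2 / \<gamma> (blk j) / 2 - \<gamma> (blk j) * (gradF df x $ j)\<^sup>2 / 2)"
  proof (rule sum.cong[OF refl])
    fix j
    have "\<gamma> (blk j) > 0" by (rule \<gamma>_pos)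
    then show "gradF df x $ j * (w - x) $ j + ((w - x) $ j)\<^sup>2 / \<gamma> (blk j) / 2
      = ((w - (x - Gamma_mult blk \<gamma> (gradF df x))) $ j)\<^sup>2 / \<gamma> (blk j) / 2 - \<gamma> (blk j) * (gradF df x $ j)\<^sup>2 / 2"
      by (simp add: Gamma_mult_def field_simps power2_eq_square)
  qed
  then show ?thesis
    unfolding inner_vec_sum Ginv_sum
    by (simp add: sum.distrib sum_subtractf sum_divide_distrib)
qed

lemma fbe_eq:
  assumes "z \<in> Tmap blk \<gamma> df G x"
  shows "FBE blk \<gamma> f df G x = ereal (Fsum f x + gradF df x \<bullet> (z - x) + Ginv_normsq blk \<gamma> (z - x) / 2) + G z"
proof (rule antisym)
  show "FBE blk \<gamma> f df G x \<le> ereal (Fsum f x + gradF df x \<bullet> (z - x) + Ginv_normsq blk \<gamma> (z - x) / 2) + G z"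
    by (rule FBE_le)
next
  let ?u = "x - Gamma_mult blk \<gamma> (gradF df x)"
  let ?K = "(\<Sum>j\<in>UNIV. \<gamma> (blk j) * (gradF df x $ j)\<^sup>2 / 2)"
  have h: "ereal (Fsum f x + gradF df x \<bullet> (w - x) + Ginv_normsq blk \<gamma> (w - x) / 2) + G w
        = ereal (Fsum f x - ?K) + (G w + ereal (Ginv_normsq blk \<gamma> (w - ?u) / 2))" for w
  proof -
    have "Fsum f x + gradF df x \<bullet> (w - x) + Ginv_normsq blk \<gamma> (w - x) / 2
        = (Fsum f x - ?K) + Ginv_normsq blk \<gamma> (w - ?u) / 2"
      using shift_id[of x w] by simp
    then have eq: "ereal (Fsum f x + gradF df x \<bullet> (w - x) + Ginv_normsq blk \<gamma> (w - x) / 2)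
        = ereal (Fsum f x - ?K) + ereal (Ginv_normsq blk \<gamma> (w - ?u) / 2)" by simp
    show ?thesis unfolding eq
      by (simp only: add.assoc add.commute[of "ereal (Ginv_normsq blk \<gamma> (w - ?u) / 2)"])
  qed
  have "ereal (Fsum f x + gradF df x \<bullet> (z - x) + Ginv_normsq blk \<gamma> (z - x) / 2) + G z
      \<le> ereal (Fsum f x + gradF df x \<bullet> (w - x) + Ginv_normsq blk \<gamma> (w - x) / 2) + G w" for w
    unfolding h
    using assms unfolding Tmap_def prox_Ginv_def by (intro add_left_mono) blast
  then show "ereal (Fsum f x + gradF df x \<bullet> (z - x) + Ginv_normsq blk \<gamma> (z - x) / 2) + G z \<le> FBE blk \<gamma> f df G x"
    unfolding FBE_def by (intro INF_greatest) simp
qed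

end


lemma per_j_A:
  fixes g x z xs \<gamma> \<mu> N :: real
  assumes "\<gamma> > 0" "\<mu> > 0" "N > 0"
  shows "g * (z - x) + (z - x)\<^sup>2 / \<gamma> / 2 - ((x - \<gamma> * g) - z) * (xs - z) / \<gamma> - g * (xs - x) - \<mu> / 2 * (xs - x)\<^sup>2 / N
         \<le> (N - \<gamma> * \<mu>) / (2 * \<gamma>\<^sup>2 * \<mu>) * (z - x)\<^sup>2"
proof -
  have "(N - \<gamma> * \<mu>) / (2 * \<gamma>\<^sup>2 * \<mu>) * (z - x)\<^sup>2 - (g * (z - x) + (z - x)\<^sup>2 / \<gamma> / 2 - ((x - \<gamma> * g) - z) * (xs - z) / \<gamma> - g * (xs - x) - \<mu> / 2 * (xs - x)\<^sup>2 / N)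
     = \<mu> / (2 * N) * ((xs - x) - N * (z - x) / (\<gamma> * \<mu>))\<^sup>2"
    using assms by (simp add: field_simps power2_eq_square)
  moreover have "\<mu> / (2 * N) * ((xs - x) - N * (z - x) / (\<gamma> * \<mu>))\<^sup>2 \<ge> 0" using assms by simp
  ultimately show ?thesis by linarith
qed

context bcs
begin

lemma real_G_finite:
  assumes "\<bar>G a\<bar> \<noteq> \<infinity>" shows "G a = ereal (real_of_ereal (G a))"
  using assms by (simp add: ereal_real)

lemma fbe_upper:
  assumes z: "z \<in> Tmap blk \<gamma> df G x" and gs: "\<bar>G xs\<bar> \<noteq> \<infinity>"
  shows "Fsum f x + gradF df x \<bullet> (z - x) + Ginv_normsq blk \<gamma> (z - x) / 2 + real_of_ereal (G z)
     \<le> Fsum f xs + real_of_ereal (G xs)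
        + (\<Sum>j\<in>UNIV. (real CARD('n) - \<gamma> (blk j) * \<mu> (blk j)) / (2 * (\<gamma> (blk j))\<^sup>2 * \<mu> (blk j)) * (z $ j - x $ j)\<^sup>2)"
proof -
  let ?g = "gradF df x"
  let ?u = "x - Gamma_mult blk \<gamma> ?g"
  let ?N = "real CARD('n)"
  define S where "S = (\<Sum>j\<in>UNIV. (?u $ j - z $ j) * (xs $ j - z $ j) / \<gamma> (blk j))"
  have zp: "z \<in> prox_Ginv blk \<gamma> G ?u" using z unfolding Tmap_def .
  have gz: "\<bar>G z\<bar> \<noteq> \<infinity>" by (rule Gz_finite[OF zp])
  have "G xs \<ge> G z + ereal S" unfolding S_def by (rule prox_vi[OF zp])
  then have vi: "real_of_ereal (G xs) \<ge> real_of_ereal (G z) + S"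
    using real_G_finite[OF gz] real_G_finite[OF gs]
    by (metis ereal_less_eq(3) plus_ereal.simps(1))
  have sc: "Fsum f xs \<ge> Fsum f x + ?g \<bullet> (xs - x) + (1 / ?N) * (\<Sum>j\<in>UNIV. \<mu> (blk j) / 2 * ((xs - x) $ j)\<^sup>2)"
    by (rule Fsum_sc)
  have sm: "(\<Sum>j\<in>UNIV. ?g $ j * (z $ j - x $ j) + (z $ j - x $ j)\<^sup>2 / \<gamma> (blk j) / 2
        - (?u $ j - z $ j) * (xs $ j - z $ j) / \<gamma> (blk j) - ?g $ j * (xs $ j - x $ j)
        - \<mu> (blk j) / 2 * (xs $ j - x $ j)\<^sup>2 / ?N)
     \<le> (\<Sum>j\<in>UNIV. (?N - \<gamma> (blk j) * \<mu> (blk j)) / (2 * (\<gamma> (blk j))\<^sup>2 * \<mu> (blk j)) * (z $ j - x $ j)\<^sup>2)"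
  proof (rule sum_mono)
    fix j
    have "?u $ j = x $ j - \<gamma> (blk j) * ?g $ j" by (simp add: Gamma_mult_def)
    then show "?g $ j * (z $ j - x $ j) + (z $ j - x $ j)\<^sup>2 / \<gamma> (blk j) / 2
        - (?u $ j - z $ j) * (xs $ j - z $ j) / \<gamma> (blk j) - ?g $ j * (xs $ j - x $ j)
        - \<mu> (blk j) / 2 * (xs $ j - x $ j)\<^sup>2 / ?N
      \<le> (?N - \<gamma> (blk j) * \<mu> (blk j)) / (2 * (\<gamma> (blk j))\<^sup>2 * \<mu> (blk j)) * (z $ j - x $ j)\<^sup>2"
      using per_j_A[OF \<gamma>_pos[of "blk j"] \<mu>_pos[of "blk j"], where N="?N" and g="?g $ j" and z="z $ j" and x="x $ j" and xs="xs $ j"] by simp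
  qed
  have eq: "(\<Sum>j\<in>UNIV. ?g $ j * (z $ j - x $ j) + (z $ j - x $ j)\<^sup>2 / \<gamma> (blk j) / 2
        - (?u $ j - z $ j) * (xs $ j - z $ j) / \<gamma> (blk j) - ?g $ j * (xs $ j - x $ j)
        - \<mu> (blk j) / 2 * (xs $ j - x $ j)\<^sup>2 / ?N)
     = ?g \<bullet> (z - x) + Ginv_normsq blk \<gamma> (z - x) / 2 - S - ?g \<bullet> (xs - x)
        - (1 / ?N) * (\<Sum>j\<in>UNIV. \<mu> (blk j) / 2 * ((xs - x) $ j)\<^sup>2)"
    unfolding S_def inner_vec_sum Ginv_sum
    by (simp add: sum.distrib sum_subtractf sum_divide_distrib)
  show ?thesis using vi sc sm eq by linarith
qed

lemma mu_le_L: "\<mu> i \<le> L i"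
proof -
  obtain j where j: "blk j = i" using blocks_nonempty by (metis surjD)
  let ?y = "axis j (1::real) :: real^'c"
  have n: "(norm (blockproj blk i (?y - 0)))\<^sup>2 = 1"
  proof -
    have "(norm (blockproj blk i (?y - 0)))\<^sup>2 = (\<Sum>k\<in>UNIV. if k = j then 1 else 0)"
      unfolding norm_blockproj_sq by (rule sum.cong) (auto simp: axis_def j)
    then show ?thesis by simp
  qed
  show ?thesis using descent[of i ?y 0] strong_conv[of i 0 ?y] unfolding n by simp
qed

lemma fbe_decrease:
  "Fsum f (bc_update blk x z I) + gradF df (bc_update blk x z I) \<bullet> (z - bc_update blk x z I)
     + Ginv_normsq blk \<gamma> (z - bc_update blk x z I) / 2
   \<le> Fsum f x + gradF df x \<bullet> (z - x) + Ginv_normsq blk \<gamma> (z - x) / 2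
     - (\<Sum>j\<in>UNIV. if blk j \<in> I then (real CARD('n) - \<gamma> (blk j) * L (blk j)) / (2 * real CARD('n) * \<gamma> (blk j)) * (z $ j - x $ j)\<^sup>2 else 0)"
proof -
  let ?x' = "bc_update blk x z I"
  let ?N = "real CARD('n)"
  have P: "blockproj blk i ?x' = (if i \<in> I then blockproj blk i z else blockproj blk i x)" for i
    by (auto simp: vec_eq_iff bc_update_def)
  have per_i: "f i ?x' - f i x + (df i ?x' \<bullet> (z - ?x') - df i x \<bullet> (z - x))
      \<le> (if i \<in> I then L i / 2 else 0) * (norm (blockproj blk i (z - x)))\<^sup>2" for i
  proof (cases "i \<in> I")
    case True
    have "f i ?x' = f i z"
    proof -
      have "f i ?x' = f i (blockproj blk i ?x')" by (rule f_block)
      also have "\<dots> = f i (blockproj blk i z)" using P[of i] True by simp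
      also have "\<dots> = f i z" by (rule f_block[symmetric])
      finally show ?thesis .
    qed
    moreover have "df i ?x' \<bullet> (z - ?x') = 0"
    proof -
      have "df i ?x' \<bullet> (z - ?x') = df i ?x' \<bullet> blockproj blk i (z - ?x')"
        by (rule inner_supp) (simp add: df_supp)
      also have "blockproj blk i (z - ?x') = 0" using P[of i] True by (simp add: blockproj_diff)
      finally show ?thesis by simp
    qed
    ultimately show ?thesis using descent[of i z x] True by simp
  next
    case False
    have "f i ?x' = f i x"
    proof -
      have "f i ?x' = f i (blockproj blk i ?x')" by (rule f_block)
      also have "\<dots> = f i (blockproj blk i x)" using P[of i] False by simp
      also have "\<dots> = f i x" by (rule f_block[symmetric])
      finally show ?thesis .
    qed
    moreover have "df i ?x' = df i x" using P[of i] False by (intro df_eq) simp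
    moreover have "df i x \<bullet> (z - ?x') = df i x \<bullet> (z - x)"
    proof -
      have "df i x \<bullet> (z - ?x') = df i x \<bullet> blockproj blk i (z - ?x')"
        by (rule inner_supp) (simp add: df_supp)
      also have "blockproj blk i (z - ?x') = blockproj blk i (z - x)" using P[of i] False by (simp add: blockproj_diff)
      also have "df i x \<bullet> blockproj blk i (z - x) = df i x \<bullet> (z - x)"
        by (rule inner_supp[symmetric]) (simp add: df_supp)
      finally show ?thesis .
    qed
    ultimately show ?thesis using False by simp
  qed
  have s1: "(\<Sum>i\<in>UNIV. f i ?x' - f i x + (df i ?x' \<bullet> (z - ?x') - df i x \<bullet> (z - x)))
      \<le> (\<Sum>j\<in>UNIV. (if blk j \<in> I then L (blk j) / 2 else 0) * ((z - x) $ j)\<^sup>2)"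
  proof -
    have "(\<Sum>i\<in>UNIV. f i ?x' - f i x + (df i ?x' \<bullet> (z - ?x') - df i x \<bullet> (z - x)))
      \<le> (\<Sum>i\<in>UNIV. (if i \<in> I then L i / 2 else 0) * (norm (blockproj blk i (z - x)))\<^sup>2)"
      by (rule sum_mono) (rule per_i)
    also have "\<dots> = (\<Sum>j\<in>UNIV. (if blk j \<in> I then L (blk j) / 2 else 0) * ((z - x) $ j)\<^sup>2)"
      by (rule blocksum_norm)
    finally show ?thesis .
  qed
  have e1: "Fsum f ?x' + gradF df ?x' \<bullet> (z - ?x') - (Fsum f x + gradF df x \<bullet> (z - x))
      = (1 / ?N) * (\<Sum>i\<in>UNIV. f i ?x' - f i x + (df i ?x' \<bullet> (z - ?x') - df i x \<bullet> (z - x)))"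
    unfolding Fsum_sum gradF_inner by (simp add: sum.distrib sum_subtractf algebra_simps)
  have e2: "Ginv_normsq blk \<gamma> (z - ?x') = (\<Sum>j\<in>UNIV. if blk j \<in> I then 0 else (z $ j - x $ j)\<^sup>2 / \<gamma> (blk j))"
    unfolding Ginv_sum by (rule sum.cong) (auto simp: bc_update_def)
  have e3: "(\<Sum>j\<in>UNIV. if blk j \<in> I then (?N - \<gamma> (blk j) * L (blk j)) / (2 * ?N * \<gamma> (blk j)) * (z $ j - x $ j)\<^sup>2 else 0)
     = Ginv_normsq blk \<gamma> (z - x) / 2 - Ginv_normsq blk \<gamma> (z - ?x') / 2
       - (1 / ?N) * (\<Sum>j\<in>UNIV. (if blk j \<in> I then L (blk j) / 2 else 0) * ((z - x) $ j)\<^sup>2)"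
  proof -
    have "(\<Sum>j\<in>UNIV. if blk j \<in> I then (?N - \<gamma> (blk j) * L (blk j)) / (2 * ?N * \<gamma> (blk j)) * (z $ j - x $ j)\<^sup>2 else 0)
      = (\<Sum>j\<in>UNIV. (z $ j - x $ j)\<^sup>2 / \<gamma> (blk j) / 2 - (if blk j \<in> I then 0 else (z $ j - x $ j)\<^sup>2 / \<gamma> (blk j)) / 2
          - (1 / ?N) * ((if blk j \<in> I then L (blk j) / 2 else 0) * ((z - x) $ j)\<^sup>2))"
    proof (rule sum.cong[OF refl])
      fix j
      have "\<gamma> (blk j) > 0" "?N > 0" using \<gamma>_pos by auto
      then show "(if blk j \<in> I then (?N - \<gamma> (blk j) * L (blk j)) / (2 * ?N * \<gamma> (blk j)) * (z $ j - x $ j)\<^sup>2 else 0)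
        = (z $ j - x $ j)\<^sup>2 / \<gamma> (blk j) / 2 - (if blk j \<in> I then 0 else (z $ j - x $ j)\<^sup>2 / \<gamma> (blk j)) / 2
          - (1 / ?N) * ((if blk j \<in> I then L (blk j) / 2 else 0) * ((z - x) $ j)\<^sup>2)"
        by (auto simp: field_simps)
    qed
    also have "\<dots> = Ginv_normsq blk \<gamma> (z - x) / 2 - Ginv_normsq blk \<gamma> (z - ?x') / 2
       - (1 / ?N) * (\<Sum>j\<in>UNIV. (if blk j \<in> I then L (blk j) / 2 else 0) * ((z - x) $ j)\<^sup>2)"
      unfolding e2 by (simp add: Ginv_sum sum_subtractf sum_divide_distrib sum_distrib_left)
    finally show ?thesis .
  qed
  have "(1 / ?N) * (\<Sum>i\<in>UNIV. f i ?x' - f i x + (df i ?x' \<bullet> (z - ?x') - df i x \<bullet> (z - x)))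
     \<le> (1 / ?N) * (\<Sum>j\<in>UNIV. (if blk j \<in> I then L (blk j) / 2 else 0) * ((z - x) $ j)\<^sup>2)"
    by (rule mult_left_mono[OF s1]) simp
  then show ?thesis using e1 e3 by linarith
qed

lemma phi_le_fbe:
  "Fsum f z \<le> Fsum f x + gradF df x \<bullet> (z - x) + Ginv_normsq blk \<gamma> (z - x) / 2"
proof -
  have "(1 / real CARD('n)) * (\<Sum>j\<in>UNIV. L (blk j) / 2 * ((z - x) $ j)\<^sup>2) \<le> Ginv_normsq blk \<gamma> (z - x) / 2"
    unfolding Ginv_sum sum_distrib_left sum_divide_distrib
  proof (rule sum_mono)
    fix j
    have g: "\<gamma> (blk j) > 0" "\<gamma> (blk j) * L (blk j) < real CARD('n)" by (rule \<gamma>_pos, rule \<gamma>_bound)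
    then have "L (blk j) / real CARD('n) \<le> 1 / \<gamma> (blk j)" by (simp add: field_simps)
    then have "L (blk j) / real CARD('n) * ((z - x) $ j)\<^sup>2 / 2 \<le> 1 / \<gamma> (blk j) * ((z - x) $ j)\<^sup>2 / 2"
      by (intro divide_right_mono mult_right_mono) auto
    then show "1 / real CARD('n) * (L (blk j) / 2 * ((z - x) $ j)\<^sup>2) \<le> ((z - x) $ j)\<^sup>2 / \<gamma> (blk j) / 2"
      by simp
  qed
  then show ?thesis using Fsum_descent[of z x] by linarith
qed

lemma phi_lower:
  assumes gz: "\<bar>G z\<bar> \<noteq> \<infinity>" and gs: "\<bar>G xs\<bar> \<noteq> \<infinity>" and mn: "\<And>y. Phi f G xs \<le> Phi f G y"
  shows "wnormsq (\<lambda>j. \<mu> (blk j) / real CARD('n)) (z - xs) / 2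
     \<le> (Fsum f z + real_of_ereal (G z)) - (Fsum f xs + real_of_ereal (G xs))"
proof -
  let ?d = "z - xs"
  let ?N = "real CARD('n)"
  let ?g = "gradF df xs"
  define a where "a = real_of_ereal (G xs)"
  define b where "b = real_of_ereal (G z)"
  define C where "C = (1 / ?N) * (\<Sum>j\<in>UNIV. L (blk j) / 2 * (?d $ j)\<^sup>2)"
  have Cnn: "C \<ge> 0" unfolding C_def using L_pos by (intro mult_nonneg_nonneg sum_nonneg) (auto simp: less_imp_le[OF L_pos])
  have key: "0 \<le> t * (?g \<bullet> ?d + b - a) + t\<^sup>2 * C" if t: "0 < t" "t \<le> 1" for t
  proof -
    let ?w = "(1 - t) *\<^sub>R xs + t *\<^sub>R z"
    have w: "?w = xs + t *\<^sub>R ?d" by (simp add: algebra_simps)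
    have "Phi f G xs \<le> Phi f G ?w" by (rule mn)
    also have "\<dots> \<le> ereal (Fsum f ?w) + ereal ((1 - t) * a + t * b)"
      unfolding Phi_def a_def b_def using G_conv_comb[OF gs gz, of t] t by (intro add_left_mono) auto
    finally have "Fsum f xs + a \<le> Fsum f ?w + ((1 - t) * a + t * b)"
      unfolding Phi_def a_def using real_G_finite[OF gs] by (metis ereal_less_eq(3) plus_ereal.simps(1))
    moreover have "Fsum f ?w \<le> Fsum f xs + t * (?g \<bullet> ?d) + t\<^sup>2 * C"
    proof -
      have "Fsum f ?w \<le> Fsum f xs + ?g \<bullet> (?w - xs) + (1 / ?N) * (\<Sum>j\<in>UNIV. L (blk j) / 2 * ((?w - xs) $ j)\<^sup>2)"
        by (rule Fsum_descent)
      also have "?w - xs = t *\<^sub>R ?d" using w by simp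
      also have "(1 / ?N) * (\<Sum>j\<in>UNIV. L (blk j) / 2 * ((t *\<^sub>R ?d) $ j)\<^sup>2) = t\<^sup>2 * C"
      proof -
        have "(\<Sum>j\<in>UNIV. L (blk j) / 2 * ((t *\<^sub>R ?d) $ j)\<^sup>2) = t\<^sup>2 * (\<Sum>j\<in>UNIV. L (blk j) / 2 * (?d $ j)\<^sup>2)"
          unfolding sum_distrib_left by (rule sum.cong[OF refl]) (simp add: power_mult_distrib)
        then show ?thesis unfolding C_def by simp
      qed
      finally show ?thesis by simp
    qed
    ultimately show ?thesis by (simp add: algebra_simps)
  qed
  have opt: "0 \<le> ?g \<bullet> ?d + b - a" by (rule limit_arg[OF Cnn key])
  have sc: "Fsum f z \<ge> Fsum f xs + ?g \<bullet> ?d + (1 / ?N) * (\<Sum>j\<in>UNIV. \<mu> (blk j) / 2 * (?d $ j)\<^sup>2)"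
    by (rule Fsum_sc)
  have "wnormsq (\<lambda>j. \<mu> (blk j) / ?N) ?d / 2 = (1 / ?N) * (\<Sum>j\<in>UNIV. \<mu> (blk j) / 2 * (?d $ j)\<^sup>2)"
    unfolding wnormsq_def by (simp add: sum_distrib_left sum_divide_distrib)
  then show ?thesis using opt sc unfolding a_def b_def by linarith
qed

end


lemma kap_alg:
  fixes N \<mu> \<kappa> s \<gamma> L :: real
  assumes "N > 0" "\<mu> > 0" "0 < s" "s < 1" "\<kappa> * (1 - s\<^sup>2) = 1" "\<gamma> = N / \<mu> * (1 - s)" "L = \<kappa> * \<mu>"
  shows "(N - \<gamma> * \<mu>) / (2 * \<gamma>\<^sup>2 * \<mu>) = \<kappa> * (1 + s)\<^sup>2 * ((N - \<gamma> * L) / (2 * N * \<gamma>))"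
proof -
  have e1: "N - \<gamma> * \<mu> = N * s" using assms(2,6) by (simp add: field_simps)
  have e2: "\<kappa> * ((1 - s) * (1 + s)) = 1" using assms(5) by (simp add: power2_eq_square algebra_simps)
  have ss: "s * s \<noteq> 1" using mult_strict_mono[of s 1 s 1] assms(3,4) by simp
  have nz: "(1 - s) * (1 + s) \<noteq> 0" using assms(3,4) by auto
  have k: "\<kappa> = 1 / ((1 - s) * (1 + s))" using e2 nz by (subst eq_divide_eq) simp
  have g: "\<gamma> = N * (1 - s) / \<mu>" using assms(6) by simp
  have "\<gamma> * L = N * ((1 - s) * \<kappa>)" unfolding assms(6,7) using assms(2) by (simp add: field_simps)
  also have "(1 - s) * \<kappa> = 1 / (1 + s)" unfolding k using assms(3,4) ss by (simp add: field_simps)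
  finally have "\<gamma> * L = N / (1 + s)" by simp
  then have e3: "N - \<gamma> * L = N * s / (1 + s)" using assms(3) by (simp add: field_simps)
  have a: "1 - s > 0" "1 + s > 0" using assms(3,4) by auto
  have lhs0: "\<And>a. a > 0 \<Longrightarrow> (N * s) / (2 * (N * a / \<mu>)\<^sup>2 * \<mu>) = s * \<mu> / (2 * N * a\<^sup>2)"
    using assms(1,2) by (simp add: field_simps power2_eq_square)
  have rhs0: "\<And>a b. a > 0 \<Longrightarrow> b > 0 \<Longrightarrow> 1 / (a * b) * b\<^sup>2 * ((N * s / b) / (2 * N * (N * a / \<mu>))) = s * \<mu> / (2 * N * a\<^sup>2)"
    using assms(1,2) by (simp add: field_simps power2_eq_square)
  have lhs: "(N * s) / (2 * \<gamma>\<^sup>2 * \<mu>) = s * \<mu> / (2 * N * (1 - s)\<^sup>2)"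
    unfolding g by (rule lhs0[OF a(1)])
  have rhs: "\<kappa> * (1 + s)\<^sup>2 * ((N * s / (1 + s)) / (2 * N * \<gamma>)) = s * \<mu> / (2 * N * (1 - s)\<^sup>2)"
    unfolding g k by (rule rhs0[OF a])
  show ?thesis unfolding e1 e3 lhs rhs ..
qed

lemma finite_pmf_nset: "finite (set_pmf (M :: ('n::finite) set pmf))"
  by (rule finite_subset[OF subset_UNIV]) simp

lemma exp_ind:
  fixes M :: "('n::finite) set pmf" and blk :: "'c::finite \<Rightarrow> 'n"
  shows "measure_pmf.expectation M (\<lambda>I. \<Sum>j\<in>UNIV. if blk j \<in> I then w j else 0)
       = (\<Sum>j\<in>UNIV. w j * measure_pmf.prob M {I. blk j \<in> I})"
proof -
  have "measure_pmf.expectation M (\<lambda>I. \<Sum>j\<in>UNIV. if blk j \<in> I then w j else 0)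
      = (\<Sum>j\<in>UNIV. measure_pmf.expectation M (\<lambda>I. if blk j \<in> I then w j else 0))"
    by (rule Bochner_Integration.integral_sum) (rule integrable_measure_pmf_finite[OF finite_pmf_nset])
  also have "\<dots> = (\<Sum>j\<in>UNIV. w j * measure_pmf.prob M {I. blk j \<in> I})"
  proof (rule sum.cong[OF refl])
    fix j
    have "(\<lambda>I. if blk j \<in> I then w j else 0) = (\<lambda>I. w j * indicator {I. blk j \<in> I} I)"
      by (auto simp: indicator_def)
    then show "measure_pmf.expectation M (\<lambda>I. if blk j \<in> I then w j else 0) = w j * measure_pmf.prob M {I. blk j \<in> I}"
      by simp
  qed
  finally show ?thesis .
qed

lemma finite_bc_hist: "finite (set_pmf (bc_hist Q k))"
  for Q :: "('n::finite) set list \<Rightarrow> 'n set pmf"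
  by (induction k) (auto intro: finite_pmf_nset)



locale bcs2 = bcs blk f df L \<mu> \<gamma> G
  for blk :: "'c::finite \<Rightarrow> 'n::finite"
    and f :: "'n \<Rightarrow> real^'c \<Rightarrow> real"
    and df :: "'n \<Rightarrow> real^'c \<Rightarrow> real^'c"
    and L \<mu> \<gamma> :: "'n \<Rightarrow> real"
    and G :: "real^'c \<Rightarrow> ereal" +
  fixes Q :: "'n set list \<Rightarrow> 'n set pmf"
    and sel :: "'n set list \<Rightarrow> real^'c"
    and x0 xs :: "real^'c"
    and p :: "'n \<Rightarrow> real"
  assumes xstar_min: "\<And>y. Phi f G xs \<le> Phi f G y"
    and p_pos: "\<And>i. p i > 0"
    and sampling: "\<And>h i. measure_pmf.prob (Q h) {I. i \<in> I} \<ge> p i"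
    and sel_T: "\<And>h. sel h \<in> Tmap blk \<gamma> df G (bc_iter blk x0 sel h)"
begin

definition "Aq x z = Fsum f x + gradF df x \<bullet> (z - x) + Ginv_normsq blk \<gamma> (z - x) / 2"
definition "xk h = bc_iter blk x0 sel h"
definition "m = Fsum f xs + real_of_ereal (G xs)"
definition "V h = Aq (xk h) (sel h) + real_of_ereal (G (sel h)) - m"
definition "acoef i = (real CARD('n) - \<gamma> i * \<mu> i) / (2 * (\<gamma> i)\<^sup>2 * \<mu> i)"
definition "bcoef i = (real CARD('n) - \<gamma> i * L i) / (2 * real CARD('n) * \<gamma> i)"

lemma gs: "\<bar>G xs\<bar> \<noteq> \<infinity>"
proof -
  obtain w where w: "G w \<noteq> \<infinity>" using G_proper unfolding proper_fun_def by blast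
  have "Phi f G xs \<le> Phi f G w" by (rule xstar_min)
  moreover have "Phi f G w \<noteq> \<infinity>" using w unfolding Phi_def by simp
  ultimately have "G xs \<noteq> \<infinity>"
  proof (intro notI)
    assume a: "Phi f G xs \<le> Phi f G w" "Phi f G w \<noteq> \<infinity>" "G xs = \<infinity>"
    then have "Phi f G xs = \<infinity>" unfolding Phi_def by simp
    then show False using a(1,2) by simp
  qed
  moreover have "G xs \<noteq> -\<infinity>" using G_proper unfolding proper_fun_def by blast
  ultimately show ?thesis by auto
qed

lemma Phi_xs: "Phi f G xs = ereal m"
proof -
  obtain g where g: "G xs = ereal g" using gs by (cases "G xs") auto
  show ?thesis unfolding Phi_def m_def g by simp
qed

lemma gsel: "\<bar>G (sel h)\<bar> \<noteq> \<infinity>"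
  using sel_T[of h] unfolding Tmap_def by (rule Gz_finite)

lemma FBE_val: "FBE blk \<gamma> f df G (xk h) = ereal (V h + m)"
proof -
  have "FBE blk \<gamma> f df G (xk h) = ereal (Aq (xk h) (sel h)) + G (sel h)"
    unfolding xk_def Aq_def by (rule fbe_eq[OF sel_T])
  also have "\<dots> = ereal (Aq (xk h) (sel h) + real_of_ereal (G (sel h)))"
  proof -
    obtain g where g: "G (sel h) = ereal g" using gsel[of h] by (cases "G (sel h)") auto
    show ?thesis unfolding g by simp
  qed
  finally show ?thesis unfolding V_def by simp
qed

lemma FBE_V: "FBE blk \<gamma> f df G (xk h) - Phi f G xs = ereal (V h)"
  unfolding FBE_val Phi_xs by simp

lemma V_step:
  "V (I # h) \<le> V h - (\<Sum>j\<in>UNIV. if blk j \<in> I then bcoef (blk j) * (sel h $ j - xk h $ j)\<^sup>2 else 0)"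
proof -
  let ?x = "xk h" and ?z = "sel h"
  have x': "xk (I # h) = bc_update blk ?x ?z I" by (simp add: xk_def)
  have "ereal (V (I # h) + m) = FBE blk \<gamma> f df G (xk (I # h))"
    by (rule FBE_val[symmetric])
  also have "\<dots> \<le> ereal (Aq (xk (I # h)) ?z) + G ?z"
    unfolding Aq_def by (rule FBE_le)
  also have "\<dots> = ereal (Aq (xk (I # h)) ?z + real_of_ereal (G ?z))"
  proof -
    obtain g where g: "G ?z = ereal g" using gsel[of h] by (cases "G ?z") auto
    show ?thesis unfolding g by simp
  qed
  finally have "V (I # h) + m \<le> Aq (xk (I # h)) ?z + real_of_ereal (G ?z)" by simp
  moreover have "Aq (xk (I # h)) ?z \<le> Aq ?x ?z - (\<Sum>j\<in>UNIV. if blk j \<in> I then bcoef (blk j) * (?z $ j - ?x $ j)\<^sup>2 else 0)"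
    unfolding x' Aq_def bcoef_def by (rule fbe_decrease)
  ultimately show ?thesis unfolding V_def by linarith
qed

lemma V_upper: "V h \<le> (\<Sum>j\<in>UNIV. acoef (blk j) * (sel h $ j - xk h $ j)\<^sup>2)"
  using fbe_upper[OF sel_T gs, of h] unfolding V_def Aq_def m_def acoef_def xk_def by linarith

lemma bcoef_nn: "bcoef i \<ge> 0"
  unfolding bcoef_def using \<gamma>_bound[of i] \<gamma>_pos[of i] by (intro divide_nonneg_pos) auto

lemma acoef_pos: "acoef i > 0"
proof -
  have "\<gamma> i * \<mu> i \<le> \<gamma> i * L i" using mu_le_L[of i] \<gamma>_pos[of i] by simp
  then have "real CARD('n) - \<gamma> i * \<mu> i > 0" using \<gamma>_bound[of i] by linarith
  then show ?thesis unfolding acoef_def using \<gamma>_pos[of i] \<mu>_pos[of i] by simp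
qed

lemma c_lt_1:
  assumes ch: "\<And>i. c * acoef i \<le> p i * bcoef i"
  shows "c < 1"
proof -
  obtain i :: 'n where True by blast
  have p1: "p i \<le> 1" using sampling[where h="[]" and i=i] measure_pmf.prob_le_1[of "Q []" "{I. i \<in> I}"] by linarith
  have "\<gamma> i * \<mu> i \<le> \<gamma> i * L i" using mu_le_L[of i] \<gamma>_pos[of i] by simp
  then have gm: "real CARD('n) - \<gamma> i * L i \<le> real CARD('n) - \<gamma> i * \<mu> i" "\<gamma> i * \<mu> i < real CARD('n)"
    using \<gamma>_bound[of i] by linarith+
  have "p i * bcoef i \<le> bcoef i" using mult_right_mono[OF p1 bcoef_nn[of i]] by simp
  also have "bcoef i < acoef i"
  proof -
    have g: "\<gamma> i > 0" "\<mu> i > 0" "real CARD('n) > 0" using \<gamma>_pos \<mu>_pos by auto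
    have "bcoef i \<le> (real CARD('n) - \<gamma> i * \<mu> i) / (2 * real CARD('n) * \<gamma> i)"
      unfolding bcoef_def using g gm by (intro divide_right_mono) auto
    also have "\<dots> < acoef i"
    proof -
      have pos: "real CARD('n) - \<gamma> i * \<mu> i > 0" using gm by linarith
      have "2 * (\<gamma> i)\<^sup>2 * \<mu> i < 2 * real CARD('n) * \<gamma> i"
        using gm(2) g by (simp add: power2_eq_square)
      then show ?thesis unfolding acoef_def using pos g
        by (intro divide_strict_left_mono) (auto simp: power2_eq_square)
    qed
    finally show ?thesis .
  qed
  finally have "c * acoef i < acoef i" using ch[of i] by linarith
  then show ?thesis using acoef_pos[of i] by simp
qed

lemma claim1:
  assumes c0: "0 \<le> c" and ch: "\<And>i. c * acoef i \<le> p i * bcoef i"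
  shows "measure_pmf.expectation (Q h) (\<lambda>I. V (I # h)) \<le> (1 - c) * V h"
proof -
  define r where "r j = (sel h $ j - xk h $ j)\<^sup>2" for j
  have int: "integrable (measure_pmf (Q h)) g" for g :: "'n set \<Rightarrow> real"
    by (rule integrable_measure_pmf_finite[OF finite_pmf_nset])
  have "measure_pmf.expectation (Q h) (\<lambda>I. V (I # h))
     \<le> measure_pmf.expectation (Q h) (\<lambda>I. V h - (\<Sum>j\<in>UNIV. if blk j \<in> I then bcoef (blk j) * r j else 0))"
    by (rule Bochner_Integration.integral_mono[OF int int]) (unfold r_def, rule V_step)
  also have "\<dots> = V h - (\<Sum>j\<in>UNIV. bcoef (blk j) * r j * measure_pmf.prob (Q h) {I. blk j \<in> I})"
    using int by (simp add: exp_ind)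
  also have "\<dots> \<le> V h - (\<Sum>j\<in>UNIV. c * (acoef (blk j) * r j))"
  proof -
    have "(\<Sum>j\<in>UNIV. c * (acoef (blk j) * r j)) \<le> (\<Sum>j\<in>UNIV. bcoef (blk j) * r j * measure_pmf.prob (Q h) {I. blk j \<in> I})"
    proof (rule sum_mono)
      fix j
      have rn: "r j \<ge> 0" unfolding r_def by simp
      have "c * (acoef (blk j) * r j) = (c * acoef (blk j)) * r j" by simp
      also have "\<dots> \<le> (p (blk j) * bcoef (blk j)) * r j" using ch rn by (rule mult_right_mono)
      also have "\<dots> \<le> (measure_pmf.prob (Q h) {I. blk j \<in> I} * bcoef (blk j)) * r j"
        using sampling[where h=h and i="blk j"] bcoef_nn[of "blk j"] rn by (intro mult_right_mono) auto
      finally show "c * (acoef (blk j) * r j) \<le> bcoef (blk j) * r j * measure_pmf.prob (Q h) {I. blk j \<in> I}"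
        by (simp add: mult_ac)
    qed
    then show ?thesis by linarith
  qed
  also have "\<dots> \<le> V h - c * V h"
  proof -
    have "c * V h \<le> c * (\<Sum>j\<in>UNIV. acoef (blk j) * r j)"
      using V_upper[of h] c0 unfolding r_def by (rule mult_left_mono)
    then show ?thesis by (simp add: sum_distrib_left)
  qed
  finally show ?thesis by (simp add: algebra_simps)
qed

lemma hist_bound:
  assumes c0: "0 \<le> c" and ch: "\<And>i. c * acoef i \<le> p i * bcoef i"
  shows "measure_pmf.expectation (bc_hist Q k) V \<le> (1 - c) ^ k * V []"
proof (induction k)
  case 0
  then show ?case by simp
next
  case (Suc k)
  let ?p = "bc_hist Q k"
  let ?A = "set_pmf ?p"
  have c1: "1 - c \<ge> 0" using c_lt_1[OF ch] by simp
  have "measure_pmf.expectation (bc_hist Q (Suc k)) V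
      = (\<Sum>a\<in>?A. pmf ?p a *\<^sub>R measure_pmf.expectation (map_pmf (\<lambda>I. I # a) (Q a)) V)"
    unfolding bc_hist.simps
    by (rule pmf_expectation_bind[OF finite_bc_hist]) (auto intro: finite_pmf_nset)
  also have "\<dots> = (\<Sum>a\<in>?A. pmf ?p a * measure_pmf.expectation (Q a) (\<lambda>I. V (I # a)))"
    by simp
  also have "\<dots> \<le> (\<Sum>a\<in>?A. pmf ?p a * ((1 - c) * V a))"
    by (intro sum_mono mult_left_mono claim1[OF c0 ch]) simp
  also have "\<dots> = (1 - c) * (\<Sum>a\<in>?A. pmf ?p a *\<^sub>R V a)"
    by (simp add: sum_distrib_left mult_ac)
  also have "(\<Sum>a\<in>?A. pmf ?p a *\<^sub>R V a) = measure_pmf.expectation ?p V"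
    by (rule integral_measure_pmf[OF finite_bc_hist, symmetric]) auto
  also have "(1 - c) * measure_pmf.expectation ?p V \<le> (1 - c) * ((1 - c) ^ k * V [])"
    using Suc.IH c1 by (rule mult_left_mono)
  finally show ?case by simp
qed

lemma phi_sel: "real_of_ereal (Phi f G (sel h) - Phi f G xs) \<le> V h"
proof -
  obtain g where g: "G (sel h) = ereal g" using gsel[of h] by (cases "G (sel h)") auto
  have "Fsum f (sel h) \<le> Aq (xk h) (sel h)" unfolding Aq_def by (rule phi_le_fbe)
  then show ?thesis unfolding Phi_xs unfolding Phi_def g V_def by simp
qed

lemma wn_sel: "wnormsq (\<lambda>j. \<mu> (blk j) / real CARD('n)) (sel h - xs) / 2 \<le> V h"
proof -
  have "wnormsq (\<lambda>j. \<mu> (blk j) / real CARD('n)) (sel h - xs) / 2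
     \<le> (Fsum f (sel h) + real_of_ereal (G (sel h))) - (Fsum f xs + real_of_ereal (G xs))"
    by (rule phi_lower[OF gsel gs xstar_min])
  moreover have "Fsum f (sel h) \<le> Aq (xk h) (sel h)" unfolding Aq_def by (rule phi_le_fbe)
  ultimately show ?thesis unfolding V_def m_def by linarith
qed

lemma V0:
  assumes "G x0 = ereal g0"
  shows "V [] \<le> Fsum f x0 + g0 - m"
proof -
  have "ereal (V [] + m) = FBE blk \<gamma> f df G (xk [])" by (rule FBE_val[symmetric])
  also have "\<dots> \<le> ereal (Fsum f x0 + gradF df x0 \<bullet> (x0 - x0) + Ginv_normsq blk \<gamma> (x0 - x0) / 2) + G x0"
    unfolding xk_def bc_iter.simps by (rule FBE_le)
  also have "\<dots> = ereal (Fsum f x0 + g0)" by (simp add: assms Ginv_sum)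
  finally show ?thesis by simp
qed

lemma final_bound:
  assumes c0: "0 \<le> c" and ch: "\<And>i. c * acoef i \<le> p i * bcoef i"
    and Y: "\<And>h. Y h \<le> V h"
  shows "ereal (measure_pmf.expectation (bc_hist Q k) Y) \<le> (Phi f G x0 - Phi f G xs) * ereal ((1 - c) ^ k)"
proof -
  have c1: "1 - c > 0" using c_lt_1[OF ch] by simp
  have int: "integrable (measure_pmf (bc_hist Q k)) g" for g :: "'n set list \<Rightarrow> real"
    by (rule integrable_measure_pmf_finite[OF finite_bc_hist])
  have "measure_pmf.expectation (bc_hist Q k) Y \<le> measure_pmf.expectation (bc_hist Q k) V"
    by (rule Bochner_Integration.integral_mono[OF int int Y])
  also have "\<dots> \<le> (1 - c) ^ k * V []" by (rule hist_bound[OF c0 ch])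
  finally have E: "measure_pmf.expectation (bc_hist Q k) Y \<le> (1 - c) ^ k * V []" .
  have pk: "(1 - c) ^ k > 0" using c1 by simp
  show ?thesis
  proof (cases "G x0")
    case (real g0)
    have "(1 - c) ^ k * V [] \<le> (1 - c) ^ k * (Fsum f x0 + g0 - m)"
      using V0[OF real] pk by (intro mult_left_mono) auto
    moreover have "Phi f G x0 = ereal (Fsum f x0 + g0)" unfolding Phi_def real by simp
    ultimately show ?thesis using E unfolding Phi_xs by (simp add: mult.commute)
  next
    case PInf
    then have "Phi f G x0 = \<infinity>" unfolding Phi_def by simp
    then show ?thesis using pk c1 unfolding Phi_xs by simp
  next
    case MInf
    then show ?thesis using G_proper unfolding proper_fun_def by blast
  qed
qed

lemma rates:
  assumes c0: "0 \<le> c" and ch: "\<And>i. c * acoef i \<le> p i * bcoef i"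
  shows "bc_rates blk \<gamma> f df G Q sel x0 xs \<mu> c"
  unfolding bc_rates_def
proof (intro conjI allI)
  fix h
  have e: "(\<lambda>I. real_of_ereal (FBE blk \<gamma> f df G (bc_iter blk x0 sel (I # h)) - Phi f G xs)) = (\<lambda>I. V (I # h))"
  proof (rule ext)
    fix I
    show "real_of_ereal (FBE blk \<gamma> f df G (bc_iter blk x0 sel (I # h)) - Phi f G xs) = V (I # h)"
      unfolding FBE_V[of "I # h", unfolded xk_def] by simp
  qed
  show "ereal (measure_pmf.expectation (Q h) (\<lambda>I. real_of_ereal (FBE blk \<gamma> f df G (bc_iter blk x0 sel (I # h)) - Phi f G xs)))
        \<le> ereal (1 - c) * (FBE blk \<gamma> f df G (bc_iter blk x0 sel h) - Phi f G xs)"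
    unfolding e using FBE_V[of h] claim1[OF c0 ch, of h] unfolding xk_def by simp
next
  fix k
  show "ereal (measure_pmf.expectation (bc_hist Q k) (\<lambda>h. real_of_ereal (Phi f G (sel h) - Phi f G xs)))
        \<le> (Phi f G x0 - Phi f G xs) * ereal ((1 - c) ^ k)"
    by (rule final_bound[OF c0 ch phi_sel])
next
  fix k
  show "ereal (measure_pmf.expectation (bc_hist Q k) (\<lambda>h. wnormsq (\<lambda>j. \<mu> (blk j) / real CARD('n)) (sel h - xs) / 2))
        \<le> (Phi f G x0 - Phi f G xs) * ereal ((1 - c) ^ k)"
    by (rule final_bound[OF c0 ch wn_sel])
qed

end

lemma (in bcs2) c0_ok:
  defines "c0 \<equiv> (MIN i. (real CARD('n) - \<gamma> i * L i) / real CARD('n) * p i / \<gamma> i)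
            / (MAX i. (real CARD('n) - \<gamma> i * \<mu> i) / (\<gamma> i ^ 2 * \<mu> i))"
  shows "0 \<le> c0" "\<And>i. c0 * acoef i \<le> p i * bcoef i"
proof -
  let ?N = "real CARD('n)"
  define num where "num i = (?N - \<gamma> i * L i) / ?N * p i / \<gamma> i" for i
  define den where "den i = (?N - \<gamma> i * \<mu> i) / (\<gamma> i ^ 2 * \<mu> i)" for i
  have c0: "c0 = Min (range num) / Max (range den)" unfolding c0_def num_def den_def by simp
  have den_a: "den i = 2 * acoef i" for i unfolding den_def acoef_def
    using \<gamma>_pos[of i] \<mu>_pos[of i] by (simp add: field_simps)
  have num_b: "num i = 2 * (p i * bcoef i)" for i
    unfolding num_def bcoef_def using \<gamma>_pos[of i] by (simp add: field_simps)
  have numpos: "num i > 0" for i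
    unfolding num_b using p_pos[of i] bcoef_nn[of i] \<gamma>_bound[of i] \<gamma>_pos[of i]
    unfolding bcoef_def by (simp add: field_simps)
  have denpos: "den i > 0" for i using acoef_pos[of i] unfolding den_a by simp
  have minpos: "Min (range num) > 0" using numpos by (subst Min_gr_iff) auto
  have maxpos: "Max (range den) > 0"
  proof -
    obtain i :: 'n where True by blast
    have "den i \<le> Max (range den)" by (rule Max_ge) auto
    then show ?thesis using denpos[of i] by linarith
  qed
  show "0 \<le> c0" unfolding c0 using divide_nonneg_pos[OF less_imp_le[OF minpos] maxpos] .
  fix i
  have "c0 * den i \<le> c0 * Max (range den)"
    using \<open>0 \<le> c0\<close>[unfolded c0_def] unfolding c0[symmetric] c0_def[symmetric]
    by (intro mult_left_mono) (auto intro: Max_ge simp: c0_def num_def den_def)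
  also have "\<dots> = Min (range num)" unfolding c0 using maxpos by simp
  also have "\<dots> \<le> num i" by (rule Min_le) auto
  finally show "c0 * acoef i \<le> p i * bcoef i" unfolding den_a num_b by simp
qed

lemma (in bcs2) c1_ok:
  assumes kap: "\<forall>i. L i / \<mu> i > 1"
    and gam: "\<forall>i. \<gamma> i = real CARD('n) / \<mu> i * (1 - sqrt (1 - 1 / (L i / \<mu> i)))"
    and pp: "\<forall>i. p i = (sqrt (L i / \<mu> i) + sqrt (L i / \<mu> i - 1))\<^sup>2
                     / (\<Sum>j\<in>UNIV. (sqrt (L j / \<mu> j) + sqrt (L j / \<mu> j - 1))\<^sup>2)"
  defines "S \<equiv> (\<Sum>j\<in>UNIV. (sqrt (L j / \<mu> j) + sqrt (L j / \<mu> j - 1))\<^sup>2)"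
  shows "0 \<le> 1 / S" "\<And>i. 1 / S * acoef i \<le> p i * bcoef i"
proof -
  define W where "W i = (sqrt (L i / \<mu> i) + sqrt (L i / \<mu> i - 1))\<^sup>2" for i
  have Wpos: "W i > 0" for i
  proof -
    have "L i / \<mu> i > 0" using kap[rule_format, of i] by linarith
    then have "sqrt (L i / \<mu> i) > 0" by simp
    moreover have "sqrt (L i / \<mu> i - 1) \<ge> 0" using kap[rule_format, of i] by simp
    ultimately have "sqrt (L i / \<mu> i) + sqrt (L i / \<mu> i - 1) > 0" by linarith
    then show ?thesis unfolding W_def by simp
  qed
  have Spos: "S > 0" unfolding S_def W_def[symmetric] using Wpos
    by (intro sum_pos) auto
  show "0 \<le> 1 / S" using Spos by simp
  fix i
  define \<kappa> where "\<kappa> = L i / \<mu> i"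
  define s where "s = sqrt (1 - 1 / \<kappa>)"
  have k1: "\<kappa> > 1" using kap unfolding \<kappa>_def by auto
  have in01: "0 < 1 - 1 / \<kappa>" "1 - 1 / \<kappa> < 1" using k1 by (auto simp: field_simps)
  have s01: "0 < s" "s < 1" unfolding s_def using in01 by (auto simp: real_sqrt_lt_1_iff)
  have s2: "s\<^sup>2 = 1 - 1 / \<kappa>" unfolding s_def using in01 by simp
  have ks: "\<kappa> * (1 - s\<^sup>2) = 1" unfolding s2 using k1 by simp
  have Lk: "L i = \<kappa> * \<mu> i" unfolding \<kappa>_def using \<mu>_pos[of i] by simp
  have gk: "\<gamma> i = real CARD('n) / \<mu> i * (1 - s)" using gam unfolding s_def \<kappa>_def by simp
  have ab: "acoef i = \<kappa> * (1 + s)\<^sup>2 * bcoef i"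
    unfolding acoef_def bcoef_def
    by (rule kap_alg[OF _ \<mu>_pos s01 ks gk Lk]) simp
  have Wk: "W i = \<kappa> * (1 + s)\<^sup>2"
  proof -
    have "sqrt (\<kappa> - 1) = sqrt \<kappa> * s"
      unfolding s_def real_sqrt_mult[symmetric] using k1 by (simp add: field_simps)
    then have "W i = (sqrt \<kappa> * (1 + s))\<^sup>2" unfolding W_def \<kappa>_def[symmetric] by (simp add: algebra_simps)
    also have "\<dots> = \<kappa> * (1 + s)\<^sup>2" using k1 by (simp add: power_mult_distrib)
    finally show ?thesis .
  qed
  have "p i = W i / S" using pp unfolding W_def S_def by simp
  then show "1 / S * acoef i \<le> p i * bcoef i" unfolding ab Wk by simp
qed

theorem theorem2p7:
  fixes blk :: "'c::finite \<Rightarrow> 'n::finite"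
    and f :: "'n \<Rightarrow> real^'c \<Rightarrow> real"
    and df :: "'n \<Rightarrow> real^'c \<Rightarrow> real^'c"
    and L \<mu> \<gamma> p :: "'n \<Rightarrow> real"
    and G :: "real^'c \<Rightarrow> ereal"
    and Q :: "'n set list \<Rightarrow> 'n set pmf"
    and sel :: "'n set list \<Rightarrow> real^'c"
    and x0 xstar :: "real^'c"
  assumes blocks_nonempty: "surj blk"
    and f_block: "\<And>i x. f i x = f i (blockproj blk i x)"
    and f_grad: "\<And>i x. GDERIV (f i) x :> df i x"
    and L_pos: "\<And>i. L i > 0"
    and f_lipschitz: "\<And>i x y. norm (df i x - df i y) \<le> L i * norm (blockproj blk i x - blockproj blk i y)"
    and \<mu>_pos: "\<And>i. \<mu> i > 0"
    and f_strongly_convex: "\<And>i. convex_on UNIV (\<lambda>x. f i x - \<mu> i / 2 * (norm (blockproj blk i x))\<^sup>2)"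
    and G_proper: "proper_fun G" and G_lsc: "lsc_fun G" and G_convex: "convex_ext G"
    and xstar_min: "\<And>y. Phi f G xstar \<le> Phi f G y"
    and \<gamma>_pos: "\<And>i. \<gamma> i > 0"
    and \<gamma>_bound: "\<And>i. \<gamma> i * L i < real CARD('n)"
    and p_pos: "\<And>i. p i > 0"
    and sampling: "\<And>h i. measure_pmf.prob (Q h) {I. i \<in> I} \<ge> p i"
    and sel_T: "\<And>h. sel h \<in> Tmap blk \<gamma> df G (bc_iter blk x0 sel h)"
  shows "bc_rates blk \<gamma> f df G Q sel x0 xstar \<mu>
           ((MIN i. (real CARD('n) - \<gamma> i * L i) / real CARD('n) * p i / \<gamma> i)
            / (MAX i. (real CARD('n) - \<gamma> i * \<mu> i) / (\<gamma> i ^ 2 * \<mu> i)))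
       \<and> ((\<forall>i. L i / \<mu> i > 1)
          \<and> (\<forall>i. \<gamma> i = real CARD('n) / \<mu> i * (1 - sqrt (1 - 1 / (L i / \<mu> i))))
          \<and> (\<forall>i. p i = (sqrt (L i / \<mu> i) + sqrt (L i / \<mu> i - 1))\<^sup>2
                     / (\<Sum>j\<in>UNIV. (sqrt (L j / \<mu> j) + sqrt (L j / \<mu> j - 1))\<^sup>2))
          \<longrightarrow> bc_rates blk \<gamma> f df G Q sel x0 xstar \<mu>
                (1 / (\<Sum>j\<in>UNIV. (sqrt (L j / \<mu> j) + sqrt (L j / \<mu> j - 1))\<^sup>2)))"
  proof -
  interpret bcs2 blk f df L \<mu> \<gamma> G Q sel x0 xstar p
    by unfold_locales (use assms in auto)
  show ?thesis
  proof (intro conjI impI)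
    show "bc_rates blk \<gamma> f df G Q sel x0 xstar \<mu>
           ((MIN i. (real CARD('n) - \<gamma> i * L i) / real CARD('n) * p i / \<gamma> i)
            / (MAX i. (real CARD('n) - \<gamma> i * \<mu> i) / (\<gamma> i ^ 2 * \<mu> i)))"
      by (rule rates[OF c0_ok])
  next
    assume h: "(\<forall>i. L i / \<mu> i > 1)
          \<and> (\<forall>i. \<gamma> i = real CARD('n) / \<mu> i * (1 - sqrt (1 - 1 / (L i / \<mu> i))))
          \<and> (\<forall>i. p i = (sqrt (L i / \<mu> i) + sqrt (L i / \<mu> i - 1))\<^sup>2
                     / (\<Sum>j\<in>UNIV. (sqrt (L j / \<mu> j) + sqrt (L j / \<mu> j - 1))\<^sup>2))"
    show "bc_rates blk \<gamma> f df G Q sel x0 xstar \<mu>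
                (1 / (\<Sum>j\<in>UNIV. (sqrt (L j / \<mu> j) + sqrt (L j / \<mu> j - 1))\<^sup>2))"
      using h by (intro rates c1_ok) auto
  qed
qed

end
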